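(* Let $k\ge 1$ be an integer, $\Delta\ge 0$, and let $w_1\ge w_2\ge\cdots\ge w_N\ge 0$ be reals (with the convention $w_j:=0$ for $j>N$). Suppose that $w_1+w_{k+1}<\tfrac79$, $w_{2k+1}\le\Delta$, and $\sum_{j=1}^N w_j>k\left(\tfrac79+\Delta\right)$. Then the values $w_j$ with $j>3k$ can be divided fractionally among $k$ bundles so that, for every $r\in\{1,\dots,k\}$, bundle $r$ consists of $w_r,w_{k+r},w_{2k+r}$ plus its share of the tail and has total value greater than $\tfrac79+\Delta$. Formally, there exist reals $x_{r,j}\ge 0$ ($1\le r\le k$, $3k<j\le N$) with $\sum_{r=1}^k x_{r,j}=w_j$ for all $j>3k$ and $$w_r+w_{k+r}+w_{2k+r}+\sum_{j>3k}x_{r,j}>\tfrac79+\Delta\quad\text{for all } r\in\{1,\dots,k\}.$$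
   Context: In the paper, the $w_j$ are agent $i$'s values (normalized so that her target is 1) of the items of the witness allocation in round $k$, $\Delta$ is the largest value among witness items worth less than $2/9$ (at most $2k$ items are worth at least $2/9$, which gives $w_{2k+1}\le\Delta$), and the sum hypothesis is the "Water-Level Condition" that every one of the $k$ witness bundles is worth more than $\tfrac79+\Delta$. Items of small value ("water") are treated as fractionally divisible. *)

theory Defs
  imports Complex_Main
begin

definition wext :: "(nat \<Rightarrow> real) \<Rightarrow> nat \<Rightarrow> nat \<Rightarrow> real" where
  "wext w N j = (if 1 \<le> j \<and> j \<le> N then w j else 0)"

end

theory Submission
  imports Defs
begin

theorem lemma5p5:
  fixes k N :: nat and \<Delta> :: real and w :: "nat \<Rightarrow> real"
  assumes "k \<ge> 1" and "\<Delta> \<ge> 0"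
    and "\<And>i j. 1 \<le> i \<Longrightarrow> i \<le> j \<Longrightarrow> j \<le> N \<Longrightarrow> w j \<le> w i"
    and "\<And>j. 1 \<le> j \<Longrightarrow> j \<le> N \<Longrightarrow> w j \<ge> 0"
    and "wext w N 1 + wext w N (k + 1) < 7/9"
    and "wext w N (2*k + 1) \<le> \<Delta>"
    and "(\<Sum>j=1..N. w j) > real k * (7/9 + \<Delta>)"
  shows "\<exists>x :: nat \<Rightarrow> nat \<Rightarrow> real.
           (\<forall>r\<in>{1..k}. \<forall>j\<in>{3*k<..N}. x r j \<ge> 0)
         \<and> (\<forall>j\<in>{3*k<..N}. (\<Sum>r=1..k. x r j) = w j)
         \<and> (\<forall>r\<in>{1..k}. wext w N r + wext w N (k + r) + wext w N (2*k + r)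
                           + (\<Sum>j\<in>{3*k<..N}. x r j) > 7/9 + \<Delta>)"
proof -
  define f where "f = wext w N"
  define c where "c = 7/9 + \<Delta>"
  define B where "B r = f r + f (k+r) + f (2*k+r)" for r
  define T where "T = (\<Sum>j\<in>{3*k<..N}. w j)"
  have fnn: "f j \<ge> 0" for j using assms(4) by (simp add: f_def wext_def)
  have fmono: "f j \<le> f i" if "1 \<le> i" "i \<le> j" for i j
  proof (cases "j \<le> N")
    case True then show ?thesis using assms(3)[of i j] that by (simp add: f_def wext_def)
  next
    case False then show ?thesis using fnn[of i] by (simp add: f_def wext_def)
  qed
  have Blt: "B r < c" if "r \<in> {1..k}" for r
  proof -
    have "f r \<le> f 1" "f (k+r) \<le> f (k+1)" "f (2*k+r) \<le> f (2*k+1)"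
      using that by (auto intro!: fmono)
    then show ?thesis using assms(5,6) unfolding B_def c_def f_def by linarith
  qed
  have s1: "(\<Sum>j=1..3*k. f j) = (\<Sum>r=1..k. B r)"
  proof -
    have a: "(\<Sum>j=1..3*k. f j) = (\<Sum>j=1..k. f j) + (\<Sum>j=k+1..k+k. f j) + (\<Sum>j=2*k+1..2*k+k. f j)"
    proof -
      have "(\<Sum>j=1..2*k+k. f j) = (\<Sum>j=1..2*k. f j) + (\<Sum>j=2*k+1..2*k+k. f j)"
        by (rule sum.ub_add_nat) simp
      moreover have "(\<Sum>j=1..k+k. f j) = (\<Sum>j=1..k. f j) + (\<Sum>j=k+1..k+k. f j)"
        by (rule sum.ub_add_nat) simp
      moreover have "(3::nat)*k = 2*k+k" by simp
      ultimately show ?thesis by (metis mult_2)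
    qed
    have b: "(\<Sum>j=k+1..k+k. f j) = (\<Sum>r=1..k. f (k+r))"
      using sum.shift_bounds_cl_nat_ivl[of f 1 k k] by (simp add: add.commute)
    have c: "(\<Sum>j=2*k+1..2*k+k. f j) = (\<Sum>r=1..k. f (2*k+r))"
      using sum.shift_bounds_cl_nat_ivl[of f 1 "2*k" k] by (simp add: add.commute)
    show ?thesis unfolding a b c B_def by (simp add: sum.distrib)
  qed
  have s2: "(\<Sum>j=1..N. w j) = (\<Sum>j=1..3*k. f j) + T"
  proof -
    have "(\<Sum>j=1..3*k. f j) = (\<Sum>j\<in>{1..3*k}. if j \<in> {1..N} then w j else 0)"
      by (rule sum.cong) (auto simp: f_def wext_def)
    also have "\<dots> = (\<Sum>j\<in>{1..3*k} \<inter> {1..N}. w j)"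
      by (rule sum.inter_restrict[symmetric]) simp
    finally have e: "(\<Sum>j=1..3*k. f j) = (\<Sum>j\<in>{1..3*k} \<inter> {1..N}. w j)" .
    have u: "{1..N} = ({1..3*k} \<inter> {1..N}) \<union> {3*k<..N}" by auto
    have "(\<Sum>j=1..N. w j) = (\<Sum>j\<in>{1..3*k} \<inter> {1..N}. w j) + (\<Sum>j\<in>{3*k<..N}. w j)"
      by (subst u, rule sum.union_disjoint) auto
    then show ?thesis using e T_def by simp
  qed
  define D where "D = (\<Sum>r=1..k. c - B r)"
  have Dpos: "D > 0" unfolding D_def using Blt assms(1)
    by (intro sum_pos) auto
  have DT: "D < T"
  proof -
    have "D = real k * c - (\<Sum>r=1..k. B r)" unfolding D_def by (simp add: sum_subtractf)
    moreover have "real k * (7/9 + \<Delta>) = real k * c" by (simp add: c_def)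
    ultimately show ?thesis using s1 s2 assms(7) by linarith
  qed
  have Tpos: "T > 0" using Dpos DT by linarith
  define e where "e = (T - D) / real k"
  have epos: "e > 0" using DT assms(1) by (simp add: e_def)
  have sumS: "(\<Sum>r=1..k. c - B r + e) = T"
    using assms(1) unfolding sum.distrib D_def[symmetric] by (simp add: e_def)
  define x where "x r j = w j * (c - B r + e) / T" for r j
  have "\<forall>r\<in>{1..k}. \<forall>j\<in>{3*k<..N}. x r j \<ge> 0"
  proof (intro ballI)
    fix r j assume r: "r \<in> {1..k}" and j: "j \<in> {3*k<..N}"
    have "w j \<ge> 0" using j assms(4) by auto
    moreover have "c - B r + e > 0" using Blt[OF r] epos by linarith
    ultimately show "x r j \<ge> 0" unfolding x_def using Tpos by simp
  qed
  moreover have "\<forall>j\<in>{3*k<..N}. (\<Sum>r=1..k. x r j) = w j"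
  proof
    fix j
    have "(\<Sum>r=1..k. x r j) = w j * (\<Sum>r=1..k. c - B r + e) / T"
      unfolding x_def by (simp add: sum_divide_distrib[symmetric] sum_distrib_left)
    then show "(\<Sum>r=1..k. x r j) = w j" using sumS Tpos by simp
  qed
  moreover have "\<forall>r\<in>{1..k}. wext w N r + wext w N (k + r) + wext w N (2*k + r)
                           + (\<Sum>j\<in>{3*k<..N}. x r j) > 7/9 + \<Delta>"
  proof
    fix r
    have "(\<Sum>j\<in>{3*k<..N}. x r j) = T * (c - B r + e) / T"
      unfolding x_def T_def by (simp add: sum_divide_distrib[symmetric] sum_distrib_right)
    then have "(\<Sum>j\<in>{3*k<..N}. x r j) = c - B r + e" using Tpos by simp
    then show "wext w N r + wext w N (k + r) + wext w N (2*k + r)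
                           + (\<Sum>j\<in>{3*k<..N}. x r j) > 7/9 + \<Delta>"
      using epos unfolding B_def f_def c_def by simp
  qed
  ultimately show ?thesis by blast
qed

end
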